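(* Let $X\subseteq\Omega$ be club in $\Omega$ with $0\notin X$, and $n<\omega$. If $\xi\in X$ and $\xi<\Theta_X(\Omega_n)$, then there is $\zeta<\Omega_n$ such that $\xi=\Theta_X(\zeta)$.
   Context: $\Omega$ is the first uncountable ordinal; $\varepsilon_{\Omega+1}$ the least $\varepsilon>\Omega$ with $\omega^\varepsilon=\varepsilon$. $\Omega_0=1$, $\Omega_{n+1}=\Omega^{\Omega_n}$. Every $0<\xi<\varepsilon_{\Omega+1}$ has a unique $\Omega$-normal form $\xi=\Omega^{\alpha}\beta+\gamma$ with $0<\beta<\Omega$, $\gamma<\Omega^{\alpha}$; $C(0)=\{0\}$, $C(\Omega^\alpha\beta+\gamma)=C(\alpha)\cup C(\gamma)\cup\{\beta\}$; $\xi^*=\max C(\xi)$. $\Theta_X(\xi)$ is defined by recursion on $\xi<\varepsilon_{\Omega+1}$ as the least $\theta\in X$ with $\theta>\xi^*$ such that every $\zeta<\xi$ with $\zeta^*<\theta$ satisfies $\Theta_X(\zeta)<\theta$. *)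

theory Defs
  imports Main "HOL-Library.Countable_Set"
begin

text \<open>Countable ordinals (elements of Omega) are modelled by a wellordered type 'a
whose order type is the first uncountable ordinal (assumed in the theorem:
'a uncountable and every proper initial segment countable).
Ordinals below epsilon_{Omega+1} are represented by Omega-normal forms:
Plus al be ga stands for Omega^al * be + ga.\<close>

datatype 'a onf = Zero | Plus "'a onf" 'a "'a onf"

definition o0 :: "'a::wellorder" where "o0 = (LEAST x. True)"
definition o1 :: "'a::wellorder" where "o1 = (LEAST x. o0 < x)"

fun onf_less :: "'a::wellorder onf \<Rightarrow> 'a onf \<Rightarrow> bool" where
  "onf_less Zero Zero = False"
| "onf_less Zero (Plus a b c) = True"
| "onf_less (Plus a b c) Zero = False"
| "onf_less (Plus a b c) (Plus a' b' c') =
     (onf_less a a' \<or> (a = a' \<and> (b < b' \<or> (b = b' \<and> onf_less c c'))))"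

text \<open>gamma < Omega^alpha, for gamma in normal form\<close>
fun below_pow :: "'a::wellorder onf \<Rightarrow> 'a onf \<Rightarrow> bool" where
  "below_pow Zero al = True"
| "below_pow (Plus a b c) al = onf_less a al"

fun onf_normal :: "'a::wellorder onf \<Rightarrow> bool" where
  "onf_normal Zero = True"
| "onf_normal (Plus a b c) =
     (onf_normal a \<and> o0 < b \<and> onf_normal c \<and> below_pow c a)"

fun onf_C :: "'a::wellorder onf \<Rightarrow> 'a set" where
  "onf_C Zero = {o0}"
| "onf_C (Plus a b c) = onf_C a \<union> onf_C c \<union> {b}"

definition onf_star :: "'a::wellorder onf \<Rightarrow> 'a" where
  "onf_star x = Max (onf_C x)"

definition onf_rel :: "('a::wellorder onf \<times> 'a onf) set" where
  "onf_rel = {(z, x). onf_normal z \<and> onf_normal x \<and> onf_less z x}"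

definition Theta :: "'a::wellorder set \<Rightarrow> 'a onf \<Rightarrow> 'a" where
  "Theta X = wfrec onf_rel (\<lambda>f x. LEAST t. t \<in> X \<and> onf_star x < t \<and>
      (\<forall>z. onf_normal z \<and> onf_less z x \<and> onf_star z < t \<longrightarrow> f z < t))"

text \<open>Omega_0 = 1, Omega_{n+1} = Omega^(Omega_n)\<close>
fun Omega_n :: "nat \<Rightarrow> 'a::wellorder onf" where
  "Omega_n 0 = Plus Zero o1 Zero"
| "Omega_n (Suc n) = Plus (Omega_n n) o1 Zero"

definition club :: "'a::wellorder set \<Rightarrow> bool" where
  "club X \<longleftrightarrow> (\<forall>a. \<exists>x\<in>X. a < x) \<and>
     (\<forall>a. a \<noteq> o0 \<and> (\<forall>b<a. \<exists>x\<in>X. b < x \<and> x < a) \<longrightarrow> a \<in> X)"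

end

theory Submission
  imports Defs
begin

lemma onf_less_trans: "onf_less x y \<Longrightarrow> onf_less y z \<Longrightarrow> onf_less x z"
proof (induction x arbitrary: y z)
  case Zero
  then show ?case by (cases y; cases z) auto
next
  case (Plus a b c)
  then show ?case
    by (cases y; cases z) (auto intro: less_trans)
qed

lemma acc_Zero: "Zero \<in> Wellfounded.acc onf_rel"
proof (rule acc.accI)
  fix y assume "(y, Zero) \<in> onf_rel"
  then show "y \<in> Wellfounded.acc onf_rel" by (cases y) (auto simp: onf_rel_def)
qed

lemma acc_Plus:
  assumes "a \<in> Wellfounded.acc onf_rel"
  shows "\<forall>b c. onf_normal c \<longrightarrow> below_pow c a \<longrightarrow> Plus a b c \<in> Wellfounded.acc onf_rel"
  using assms
proof (induct a rule: acc_induct_rule)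
  fix a
  assume "a \<in> Wellfounded.acc onf_rel"
  assume IHa0: "\<And>y. (y, a) \<in> onf_rel \<Longrightarrow> (\<forall>b c. onf_normal c \<longrightarrow> below_pow c y \<longrightarrow> Plus y b c \<in> Wellfounded.acc onf_rel)"
  have IHa: "\<And>y b c. (y, a) \<in> onf_rel \<Longrightarrow> onf_normal c \<Longrightarrow> below_pow c y \<Longrightarrow> Plus y b c \<in> Wellfounded.acc onf_rel"
    using IHa0 by blast
  show "\<forall>b c. onf_normal c \<longrightarrow> below_pow c a \<longrightarrow> Plus a b c \<in> Wellfounded.acc onf_rel"
  proof (intro allI impI)
    fix b c
    show "onf_normal c \<Longrightarrow> below_pow c a \<Longrightarrow> Plus a b c \<in> Wellfounded.acc onf_rel"
    proof (induction b arbitrary: c rule: less_induct)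
      case (less b)
      note IHb = less.IH
      show ?case
      proof (cases "onf_normal a")
        case False
        show ?thesis by (rule acc.accI) (use False in \<open>auto simp: onf_rel_def\<close>)
      next
        case na: True
        have cacc: "c \<in> Wellfounded.acc onf_rel"
        proof (cases c)
          case Zero then show ?thesis using acc_Zero by simp
        next
          case (Plus a1 b1 c1)
          then have "(a1, a) \<in> onf_rel" using less.prems na by (auto simp: onf_rel_def)
          then show ?thesis using IHa[of a1 c1 b1] less.prems Plus by simp
        qed
        show ?thesis using cacc less.prems
        proof (induction c rule: acc_induct_rule)
          case (1 c)
          show ?case
          proof (rule acc.accI)
            fix y assume y: "(y, Plus a b c) \<in> onf_rel"
            show "y \<in> Wellfounded.acc onf_rel"
            proof (cases y)
              case Zero then show ?thesis using acc_Zero by simp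
            next
              case (Plus a' b' c')
              with y have ny: "onf_normal y" and ly: "onf_less y (Plus a b c)"
                by (auto simp: onf_rel_def)
              consider "onf_less a' a" | "a' = a" "b' < b" | "a' = a" "b' = b" "onf_less c' c"
                using ly Plus by auto
              then show ?thesis
              proof cases
                case 1
                then have "(a', a) \<in> onf_rel" using ny na Plus by (auto simp: onf_rel_def)
                then show ?thesis using IHa[of a' c' b'] ny Plus by simp
              next
                case 2
                then show ?thesis using IHb[of b' c'] ny Plus by simp
              next
                case 3
                then have "(c', c) \<in> onf_rel" using ny "1.prems" Plus by (auto simp: onf_rel_def)
                then show ?thesis using "1.IH"[of c'] ny Plus 3 by simp
              qed
            qed
          qed
        qed
      qed
    qed
  qed
qed

lemma all_acc: "(x :: 'a::wellorder onf) \<in> Wellfounded.acc onf_rel"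
proof (induction x)
  case Zero then show ?case by (rule acc_Zero)
next
  case (Plus a b c)
  show ?case
  proof (cases "onf_normal (Plus a b c)")
    case True then show ?thesis using acc_Plus[OF Plus.IH(1)] by simp
  next
    case False show ?thesis by (rule acc.accI) (use False in \<open>auto simp: onf_rel_def\<close>)
  qed
qed

lemma wf_onf_rel: "wf onf_rel"
  by (rule acc_wfI) (simp add: all_acc)

lemma onf_less_Zero: "\<not> onf_less z Zero"
  by (cases z) auto

lemma o0_le: "o0 \<le> (x::'a::wellorder)"
  unfolding o0_def by (rule Least_le) simp

lemma o1_le: "o0 < (x::'a::wellorder) \<Longrightarrow> o1 \<le> x"
  unfolding o1_def by (rule Least_le)

lemma o0_less_o1:
  assumes "(x::'a::wellorder) \<noteq> o0"
  shows "o0 < (o1::'a)"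
proof -
  have "o0 < x" using assms o0_le[of x] by simp
  then show ?thesis unfolding o1_def by (rule LeastI)
qed

lemma Theta_eq:
  assumes "onf_normal x"
  shows "Theta X x = (LEAST t. t \<in> X \<and> onf_star x < t \<and>
      (\<forall>z. onf_normal z \<and> onf_less z x \<and> onf_star z < t \<longrightarrow> Theta X z < t))"
proof -
  have "Theta X x = (LEAST t. t \<in> X \<and> onf_star x < t \<and>
      (\<forall>z. onf_normal z \<and> onf_less z x \<and> onf_star z < t \<longrightarrow> cut (Theta X) onf_rel x z < t))"
    unfolding Theta_def by (subst wfrec[OF wf_onf_rel]) simp
  also have "\<dots> = (LEAST t. t \<in> X \<and> onf_star x < t \<and>
      (\<forall>z. onf_normal z \<and> onf_less z x \<and> onf_star z < t \<longrightarrow> Theta X z < t))"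
    using assms by (intro arg_cong[where f = Least] ext) (auto simp: cut_apply onf_rel_def)
  finally show ?thesis .
qed

lemma onf_C_fin: "finite (onf_C x) \<and> onf_C x \<noteq> {}"
  by (induction x) auto

lemma star_Zero: "onf_star Zero = o0"
  by (simp add: onf_star_def)

lemma C_Omega_n: "onf_C (Omega_n n :: 'a::wellorder onf) = {o0, o1}"
  by (induction n) auto

lemma star_Omega_n: "o0 < (o1::'a::wellorder) \<Longrightarrow> onf_star (Omega_n n :: 'a onf) = o1"
  by (simp add: onf_star_def C_Omega_n)

lemma normal_Omega_n: "o0 < (o1::'a::wellorder) \<Longrightarrow> onf_normal (Omega_n n :: 'a onf)"
  by (induction n) auto

theorem lemma3p3:
  fixes X :: "'a::wellorder set" and n :: nat and \<xi> :: 'a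
  assumes "uncountable (UNIV :: 'a set)"
    and "\<And>x::'a. countable {y. y < x}"
    and "club X" and "o0 \<notin> X"
    and "\<xi> \<in> X" and "\<xi> < Theta X (Omega_n n)"
  shows "\<exists>\<zeta>. onf_normal \<zeta> \<and> onf_less \<zeta> (Omega_n n) \<and> \<xi> = Theta X \<zeta>"
proof -
  have "\<exists>x::'a. x \<noteq> o0"
  proof (rule ccontr)
    assume "\<not> (\<exists>x::'a. x \<noteq> o0)"
    then have "(UNIV :: 'a set) = {o0}" by auto
    then show False using assms(1) countable_finite[of "{o0::'a}"] by (metis finite.emptyI finite.insertI)
  qed
  then have o01: "o0 < (o1::'a)" using o0_less_o1 by blast
  have nO: "onf_normal (Omega_n n :: 'a onf)" using normal_Omega_n[OF o01] .
  have sO: "onf_star (Omega_n n :: 'a onf) = o1" using star_Omega_n[OF o01] .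
  define S where "S = {\<zeta>. onf_normal \<zeta> \<and> onf_less \<zeta> (Omega_n n) \<and> onf_star \<zeta> < \<xi> \<and> \<xi> \<le> Theta X \<zeta>}"
  have "\<xi> \<noteq> o0" using assms(4,5) by auto
  then have x0: "o0 < \<xi>" using o0_le[of \<xi>] by simp
  have "\<exists>z. z \<in> S"
  proof (cases "\<xi> \<le> o1")
    case True
    then have xi1: "\<xi> = o1" using o1_le[OF x0] by simp
    have TZ: "Theta X Zero = (LEAST t. t \<in> X \<and> o0 < t)"
      by (subst Theta_eq) (simp_all add: star_Zero onf_less_Zero)
    have "Theta X Zero \<in> X \<and> o0 < Theta X Zero"
      unfolding TZ by (rule LeastI[of _ \<xi>]) (use assms(5) x0 in simp)
    then have "\<xi> \<le> Theta X Zero" using o1_le xi1 by blast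
    then have "Zero \<in> S" unfolding S_def using x0 by (cases n) (simp_all add: star_Zero)
    then show ?thesis by blast
  next
    case False
    show ?thesis
    proof (rule ccontr)
      assume "\<not> (\<exists>z. z \<in> S)"
      then have H: "\<forall>z. onf_normal z \<and> onf_less z (Omega_n n) \<and> onf_star z < \<xi> \<longrightarrow> Theta X z < \<xi>"
        unfolding S_def by (auto simp: not_le)
      have "Theta X (Omega_n n) \<le> \<xi>"
        unfolding Theta_eq[OF nO] by (rule Least_le) (use assms(5) False H sO in \<open>simp add: not_le\<close>)
      then show False using assms(6) by simp
    qed
  qed
  then obtain z0 where z0S: "z0 \<in> S" by blast
  obtain z where zS: "z \<in> S" and zmin: "\<And>y. (y, z) \<in> onf_rel \<Longrightarrow> y \<notin> S"
    using wfE_min[OF wf_onf_rel z0S] by blast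
  have nz: "onf_normal z" "onf_less z (Omega_n n)" "onf_star z < \<xi>" "\<xi> \<le> Theta X z"
    using zS unfolding S_def by auto
  have "\<forall>y. onf_normal y \<and> onf_less y z \<and> onf_star y < \<xi> \<longrightarrow> Theta X y < \<xi>"
  proof (intro allI impI)
    fix y assume y: "onf_normal y \<and> onf_less y z \<and> onf_star y < \<xi>"
    then have "(y, z) \<in> onf_rel" using nz by (simp add: onf_rel_def)
    then have "y \<notin> S" by (rule zmin)
    moreover have "onf_less y (Omega_n n)" using y nz onf_less_trans by blast
    ultimately show "Theta X y < \<xi>" using y unfolding S_def by (auto simp: not_le)
  qed
  then have "Theta X z \<le> \<xi>"
    unfolding Theta_eq[OF nz(1)] by (intro Least_le) (use assms(5) nz(3) in simp)
  then have "\<xi> = Theta X z" using nz(4) by simp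
  then show ?thesis using nz by blast
qed

end
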